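(* Let $r>s\ge1$ be integers and let $n\ge1$ be an integer. Then the $(r,s)$-Bell number $\phi_n^{(r,s)}$ satisfies \[ \phi_n^{(r,s)}=\frac{(r-s)^{sn}}{e}\sum_{k=0}^{\infty}\frac{1}{k!}\prod_{l=1}^{s}\frac{\Gamma\!\big(n+\frac{k-l+1}{r-s}\big)}{\Gamma\!\big(\frac{k-l+1}{r-s}\big)}. \]
   Context: Let $D=\frac{d}{dx}$ and let $x$ denote the operator of multiplication by $x$. For integers $r\ge s\ge1$ and $n\ge1$, the generalized $(r,s)$-Stirling numbers of the second kind $S_{r,s}(n,k)$ (of Blasiak–Penson–Solomon) are defined by the normal ordering identity \[ (x^{r}D^{s})^{n}=x^{n(r-s)}\sum_{k=s}^{ns}S_{r,s}(n,k)\,x^{k}D^{k}, \] and the $(r,s)$-Bell numbers are $\phi_n^{(r,s)}=\sum_{k=s}^{ns}S_{r,s}(n,k)$. Here the ratio $\Gamma(n+a)/\Gamma(a)$ stands for the rising factorial $a(a+1)\cdots(a+n-1)$ (which is its value, or limiting value, also when $a$ is a nonpositive integer). *)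

theory Defs
  imports "HOL-Computational_Algebra.Polynomial" Complex_Main
begin

definition mulx :: "real poly \<Rightarrow> real poly" where
  "mulx p = [:0, 1:] * p"

definition opD :: "real poly \<Rightarrow> real poly" where
  "opD p = pderiv p"

definition xrDs :: "nat \<Rightarrow> nat \<Rightarrow> real poly \<Rightarrow> real poly" where
  "xrDs r s = (mulx ^^ r) \<circ> (opD ^^ s)"

definition gen_stirling2 :: "nat \<Rightarrow> nat \<Rightarrow> nat \<Rightarrow> nat \<Rightarrow> real" where
  "gen_stirling2 r s n = (THE c. (\<forall>k. k \<notin> {s..n*s} \<longrightarrow> c k = 0) \<and>
     (\<forall>p. (xrDs r s ^^ n) p =
        (mulx ^^ (n * (r - s))) (\<Sum>k=s..n*s. smult (c k) ((mulx ^^ k) ((opD ^^ k) p)))))"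

definition gen_bell :: "nat \<Rightarrow> nat \<Rightarrow> nat \<Rightarrow> real" where
  "gen_bell r s n = (\<Sum>k=s..n*s. gen_stirling2 r s n k)"

end

theory Submission imports Defs begin

definition G :: "nat \<Rightarrow> nat \<Rightarrow> real" where "G k m = (\<Prod>i<k. real m - real i)"

lemma G_Suc: "G (Suc k) m = G k m * (real m - real k)" by (simp add: G_def)
lemma G_zero: "m < k \<Longrightarrow> G k m = 0" by (auto simp: G_def)
lemma G_self_nz: "G k k \<noteq> 0" by (auto simp: G_def)
lemma G_shift: "G k (i + k) * fact i = fact (i + k)"
proof (induction k arbitrary: i)
  case 0 then show ?case by (simp add: G_def)
next
  case (Suc k)
  have "G (Suc k) (i + Suc k) * fact i = G k (Suc i + k) * (real i + 1) * fact i"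
    by (simp add: G_Suc)
  also have "\<dots> = G k (Suc i + k) * fact (Suc i)" by (simp add: algebra_simps)
  also have "\<dots> = fact (Suc i + k)" by (rule Suc.IH)
  finally show ?case by simp
qed

lemma mulx_pow: "(mulx ^^ k) p = monom 1 k * p"
proof (induction k)
  case 0 then show ?case by simp
next
  case (Suc k)
  have "[:0,1:] * monom 1 k = (monom 1 (Suc k) :: real poly)"
    by (simp add: monom_Suc)
  then show ?case using Suc by (simp add: mulx_def monom_Suc)
qed

lemma opD_pow_monom: "(opD ^^ k) (monom c m) = monom (c * G k m) (m - k)"
proof (induction k)
  case 0 then show ?case by (simp add: G_def)
next
  case (Suc k)
  show ?case
  proof (cases "k \<le> m")
    case True
    then show ?thesis using Suc by (simp add: opD_def pderiv_monom G_Suc of_nat_diff algebra_simps)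
  next
    case False
    then show ?thesis using Suc by (simp add: opD_def pderiv_monom G_Suc G_zero)
  qed
qed

lemma xkDk_monom: "(mulx ^^ k) ((opD ^^ k) (monom c m)) = monom (c * G k m) m"
  by (cases "k \<le> m") (auto simp: mulx_pow opD_pow_monom mult_monom G_zero)

lemma xrDs_monom: "s \<le> r \<Longrightarrow> xrDs r s (monom c m) = monom (c * G s m) (m + (r - s))"
proof (cases "s \<le> m")
  case True
  assume "s \<le> r"
  then have "r + (m - s) = m + (r - s)" using True by arith
  then show ?thesis by (simp add: xrDs_def mulx_pow opD_pow_monom mult_monom)
qed (auto simp: xrDs_def mulx_pow opD_pow_monom mult_monom G_zero)

lemma iter_monom: "r = s + d \<Longrightarrow> (xrDs r s ^^ n) (monom c m) =
   monom (c * (\<Prod>j<n. G s (m + j*d))) (m + n*d)"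
  by (induction n) (auto simp: xrDs_monom algebra_simps)

lemma opD_pow_add: "(opD ^^ k) (p + q) = (opD ^^ k) p + (opD ^^ k) q"
  by (induction k) (auto simp: opD_def pderiv_add)

lemma xrDs_iter_add: "(xrDs r s ^^ n) (p + q) = (xrDs r s ^^ n) p + (xrDs r s ^^ n) q"
proof (induction n)
  case 0 then show ?case by simp
next
  case (Suc n) then show ?case
    by (simp add: xrDs_def mulx_pow opD_pow_add distrib_left)
qed

lemma additive_sum:
  fixes L :: "real poly \<Rightarrow> real poly"
  assumes "\<And>p q. L (p + q) = L p + L q"
  shows "L (sum f A) = (\<Sum>i\<in>A. L (f i))"
proof -
  have L0: "L 0 = 0" using assms[of 0 0] by simp
  show ?thesis
    by (induction A rule: infinite_finite_induct) (auto simp: L0 assms)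
qed

lemma linear_eq:
  fixes L M :: "real poly \<Rightarrow> real poly"
  assumes "\<And>p q. L (p + q) = L p + L q" "\<And>p q. M (p + q) = M p + M q"
    "\<And>a m. L (monom a m) = M (monom a m)"
  shows "L p = M p"
proof -
  have "L p = L (\<Sum>i\<le>degree p. monom (coeff p i) i)" by (simp add: poly_as_sum_of_monoms)
  also have "\<dots> = (\<Sum>i\<le>degree p. M (monom (coeff p i) i))"
    by (simp add: additive_sum[of L, OF assms(1)] assms(3))
  also have "\<dots> = M (\<Sum>i\<le>degree p. monom (coeff p i) i)"
    by (simp add: additive_sum[of M, OF assms(2)])
  finally show ?thesis by (simp add: poly_as_sum_of_monoms)
qed

lemma rhs_add: "(mulx ^^ N) (\<Sum>k\<in>A. smult (c k) ((mulx ^^ k) ((opD ^^ k) (p + q)))) =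
  (mulx ^^ N) (\<Sum>k\<in>A. smult (c k) ((mulx ^^ k) ((opD ^^ k) p))) +
  (mulx ^^ N) (\<Sum>k\<in>A. smult (c k) ((mulx ^^ k) ((opD ^^ k) q)))"
  by (simp add: mulx_pow opD_pow_add distrib_left smult_add_right sum.distrib)

lemma rhs_monom: "(mulx ^^ N) (\<Sum>k\<in>A. smult (c k) ((mulx ^^ k) ((opD ^^ k) (monom a m)))) =
   monom (a * (\<Sum>k\<in>A. c k * G k m)) (m + N)"
  apply (simp only: xkDk_monom)
  by (simp add: mulx_pow smult_monom mult_monom sum_distrib_left
      flip: monom_sum) (simp add: algebra_simps)


definition inV :: "nat \<Rightarrow> nat \<Rightarrow> (nat \<Rightarrow> real) \<Rightarrow> bool" where
  "inV a b f \<longleftrightarrow> (\<exists>c. (\<forall>k<a. c k = 0) \<and> (\<forall>m. f m = (\<Sum>k\<le>b. c k * G k m)))"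

lemma inV_base: "inV s s (G s)"
  unfolding inV_def
proof (rule exI[of _ "\<lambda>k. if k = s then 1 else 0"], intro conjI allI impI)
  fix m
  have "(\<Sum>k\<le>s. (if k = s then 1 else 0) * G k m) = (\<Sum>k\<le>s. if k = s then G k m else 0)"
    by (rule sum.cong) auto
  then show "G s m = (\<Sum>k\<le>s. (if k = s then 1 else 0) * G k m)" by simp
qed simp

lemma inV_lin:
  assumes "inV a b f"
  shows "inV a (Suc b) (\<lambda>m. f m * (real m + e))"
proof -
  obtain c where c0: "\<forall>k<a. c k = 0" and cf: "\<forall>m. f m = (\<Sum>k\<le>b. c k * G k m)"
    using assms unfolding inV_def by blast
  define c' where "c' k = (case k of 0 \<Rightarrow> 0 | Suc j \<Rightarrow> c j) +
      (if k \<le> b then c k * (real k + e) else 0)" for k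
  have "c' k = 0" if "k < a" for k
    using that c0 by (auto simp: c'_def split: nat.split)
  moreover have "f m * (real m + e) = (\<Sum>k\<le>Suc b. c' k * G k m)" for m
  proof -
    have "f m * (real m + e) = (\<Sum>k\<le>b. c k * G (Suc k) m) + (\<Sum>k\<le>b. c k * (real k + e) * G k m)"
      by (simp add: cf sum_distrib_right G_Suc flip: sum.distrib) (simp add: algebra_simps)
    also have "(\<Sum>k\<le>b. c k * G (Suc k) m) =
        (\<Sum>k\<le>Suc b. (case k of 0 \<Rightarrow> 0 | Suc j \<Rightarrow> c j) * G k m)"
      by (subst sum.atMost_Suc_shift) simp
    also have "(\<Sum>k\<le>b. c k * (real k + e) * G k m) =
        (\<Sum>k\<le>Suc b. (if k \<le> b then c k * (real k + e) else 0) * G k m)"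
      by simp
    finally show ?thesis by (simp add: c'_def distrib_right sum.distrib)
  qed
  ultimately show ?thesis unfolding inV_def by blast
qed

lemma inV_prod:
  assumes "inV a b f"
  shows "inV a (b + t) (\<lambda>m. f m * (\<Prod>i<t. real m + e i))"
proof (induction t)
  case 0 then show ?case using assms by simp
next
  case (Suc t)
  from inV_lin[OF Suc, of "e t"] show ?case by (simp add: mult.assoc)
qed

lemma G_as_prod: "G s (m + q) = (\<Prod>i<s. real m + (real q - real i))"
  by (simp add: G_def algebra_simps)

lemma P_inV: "inV s (Suc n * s) (\<lambda>m. \<Prod>j<Suc n. G s (m + j*d))"
proof (induction n)
  case 0 then show ?case using inV_base by simp
next
  case (Suc n)
  from inV_prod[OF Suc, of s "\<lambda>i. real (Suc n * d) - real i"]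
  show ?case by (simp add: G_as_prod add.commute distrib_right)
qed

lemma coeffs_zero:
  assumes "\<forall>m. (\<Sum>j\<le>N. e j * G j m) = 0"
  shows "k \<le> N \<Longrightarrow> e k = 0"
proof (induction k rule: less_induct)
  case (less k)
  have "0 = (\<Sum>j\<le>N. e j * G j k)" using assms by simp
  also have "\<dots> = e k * G k k + (\<Sum>j\<in>{..N} - {k}. e j * G j k)"
    using less.prems by (subst sum.remove[of _ k]) auto
  also have "(\<Sum>j\<in>{..N} - {k}. e j * G j k) = 0"
  proof (rule sum.neutral, rule ballI)
    fix j assume "j \<in> {..N} - {k}"
    then show "e j * G j k = 0"
      using less.IH[of j] less.prems G_zero[of k j] by (cases "j < k") auto
  qed
  finally show ?case using G_self_nz[of k] by simp
qed

lemma fact_sums: "(\<lambda>i. 1 / fact i) sums (exp 1 :: real)"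
  using exp_converges[of "1::real"] by (simp add: divide_inverse)

lemma G_sums: "(\<lambda>m. G k m / fact m) sums exp 1"
proof -
  have "(\<lambda>i. G k (i + k) / fact (i + k)) = (\<lambda>i. 1 / fact i)"
  proof
    fix i
    have "G k (i + k) = fact (i + k) / fact i" using G_shift[of k i]
      by (simp add: field_simps)
    then show "G k (i + k) / fact (i + k) = 1 / fact i" by simp
  qed
  then have "(\<lambda>i. G k (i + k) / fact (i + k)) sums exp 1" using fact_sums by simp
  then have "(\<lambda>m. G k m / fact m) sums (exp 1 + (\<Sum>i<k. G k i / fact i))"
    by (subst (asm) sums_iff_shift)
  moreover have "(\<Sum>i<k. G k i / fact i) = 0" by (simp add: G_zero)
  ultimately show ?thesis by simp
qed

lemma poch_scale: "(d::real) \<noteq> 0 \<Longrightarrow> d ^ n * pochhammer (a / d) n = (\<Prod>j<n. a + real j * d)"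
  by (induction n) (simp_all add: pochhammer_rec' field_simps)


lemma P_poch:
  assumes "d > 0"
  shows "real d ^ (s * n) * (\<Prod>l=1..s. pochhammer ((real m - real l + 1) / real d) n)
     = (\<Prod>j<n. G s (m + j * d))"
proof -
  have "(\<Prod>l=1..s. pochhammer ((real m - real l + 1) / real d) n)
      = (\<Prod>i<s. pochhammer ((real m - real i) / real d) n)"
    by (simp add: prod.atLeast1_atMost_eq)
  moreover have "real d ^ (s * n) = (\<Prod>i<s. real d ^ n)"
    by (simp add: power_mult mult.commute)
  ultimately have "real d ^ (s * n) * (\<Prod>l=1..s. pochhammer ((real m - real l + 1) / real d) n)
      = (\<Prod>i<s. real d ^ n * pochhammer ((real m - real i) / real d) n)"
    by (simp add: prod.distrib)
  also have "\<dots> = (\<Prod>i<s. \<Prod>j<n. (real m - real i) + real j * real d)"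
    using assms by (simp add: poch_scale)
  also have "\<dots> = (\<Prod>j<n. \<Prod>i<s. (real m - real i) + real j * real d)"
    by (rule prod.swap)
  also have "\<dots> = (\<Prod>j<n. G s (m + j * d))"
    by (simp add: G_def algebra_simps)
  finally show ?thesis .
qed

theorem theorem2:
  fixes r s n :: nat
  assumes "r > s" and "s \<ge> 1" and "n \<ge> 1"
  shows "gen_bell r s n =
    (real r - real s) ^ (s * n) / exp 1 *
    (\<Sum>k. 1 / fact k * (\<Prod>l=1..s. pochhammer ((real k - real l + 1) / (real r - real s)) n))"
proof -
  define d where "d = r - s"
  have rd: "r = s + d" and dpos: "d > 0" using assms(1) by (auto simp: d_def)
  have rsd: "real r - real s = real d" using assms(1) by (simp add: d_def of_nat_diff)
  define P where "P m = (\<Prod>j<n. G s (m + j * d))" for m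
  define Q where "Q = (\<lambda>c. (\<forall>k. k \<notin> {s..n*s} \<longrightarrow> c k = 0) \<and>
     (\<forall>p. (xrDs r s ^^ n) p =
        (mulx ^^ (n * (r - s))) (\<Sum>k=s..n*s. smult (c k) ((mulx ^^ k) ((opD ^^ k) p)))))"
  have step1: "(\<Sum>k=s..n*s. c k * G k m) = P m" if "Q c" for c m
  proof -
    have "(xrDs r s ^^ n) (monom 1 m) =
        (mulx ^^ (n * (r - s))) (\<Sum>k=s..n*s. smult (c k) ((mulx ^^ k) ((opD ^^ k) (monom 1 m))))"
      using that unfolding Q_def by blast
    then show ?thesis
      by (simp add: iter_monom[OF rd] rhs_monom P_def d_def)
  qed
  obtain n' where n': "n = Suc n'" using assms(3) by (cases n) auto
  obtain c0 where c0z: "\<forall>k<s. c0 k = 0" and c0P: "\<forall>m. P m = (\<Sum>k\<le>n*s. c0 k * G k m)"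
    using P_inV[of s n' d] unfolding inV_def P_def n' by blast
  define c where "c k = (if k \<in> {s..n*s} then c0 k else 0)" for k
  have ex: "Q c"
    unfolding Q_def
  proof (intro conjI allI impI)
    show "c k = 0" if "k \<notin> {s..n*s}" for k using that unfolding c_def by auto
    fix p
    show "(xrDs r s ^^ n) p =
        (mulx ^^ (n * (r - s))) (\<Sum>k=s..n*s. smult (c k) ((mulx ^^ k) ((opD ^^ k) p)))"
    proof (rule linear_eq[where L="xrDs r s ^^ n" and
        M="\<lambda>p. (mulx ^^ (n * (r - s))) (\<Sum>k=s..n*s. smult (c k) ((mulx ^^ k) ((opD ^^ k) p)))"])
      show "(xrDs r s ^^ n) (p + q) = (xrDs r s ^^ n) p + (xrDs r s ^^ n) q" for p q
        by (rule xrDs_iter_add)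
      show "(mulx ^^ (n * (r - s))) (\<Sum>k=s..n*s. smult (c k) ((mulx ^^ k) ((opD ^^ k) (p + q)))) =
         (mulx ^^ (n * (r - s))) (\<Sum>k=s..n*s. smult (c k) ((mulx ^^ k) ((opD ^^ k) p))) +
         (mulx ^^ (n * (r - s))) (\<Sum>k=s..n*s. smult (c k) ((mulx ^^ k) ((opD ^^ k) q)))" for p q
        by (rule rhs_add)
      fix a m
      have "(\<Sum>k=s..n*s. c k * G k m) = (\<Sum>k=s..n*s. c0 k * G k m)"
        by (rule sum.cong) (auto simp: c_def)
      also have "\<dots> = (\<Sum>k\<le>n*s. c0 k * G k m)"
        by (rule sum.mono_neutral_left) (auto simp: c0z)
      also have "\<dots> = P m" using c0P by simp
      finally have "(\<Sum>k=s..n*s. c k * G k m) = P m" .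
      then show "(xrDs r s ^^ n) (monom a m) =
        (mulx ^^ (n * (r - s))) (\<Sum>k=s..n*s. smult (c k) ((mulx ^^ k) ((opD ^^ k) (monom a m))))"
        by (simp add: iter_monom[OF rd] rhs_monom P_def d_def)
    qed
  qed
  have uniq: "c1 = c2" if "Q c1" "Q c2" for c1 c2
  proof
    fix k
    have ext: "(\<Sum>k\<le>n*s. ci k * G k m) = P m" if "Q ci" for ci m
    proof -
      have "(\<Sum>k\<le>n*s. ci k * G k m) = (\<Sum>k=s..n*s. ci k * G k m)"
        using that unfolding Q_def by (intro sum.mono_neutral_right) auto
      also have "\<dots> = P m" by (rule step1[OF that])
      finally show ?thesis .
    qed
    have "\<forall>m. (\<Sum>j\<le>n*s. (c1 j - c2 j) * G j m) = 0"
      using ext[OF that(1)] ext[OF that(2)] by (simp add: left_diff_distrib sum_subtractf)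
    then have "k \<le> n*s \<Longrightarrow> c1 k - c2 k = 0" by (rule coeffs_zero)
    moreover have "k > n*s \<Longrightarrow> c1 k = 0 \<and> c2 k = 0" using that unfolding Q_def by auto
    ultimately show "c1 k = c2 k" by force
  qed
  have gs: "gen_stirling2 r s n = (THE c. Q c)" by (simp add: gen_stirling2_def Q_def)
  have QC: "Q (gen_stirling2 r s n)"
    unfolding gs by (rule theI[of Q c]) (use ex uniq in auto)
  define C where "C = gen_stirling2 r s n"
  have CP: "(\<Sum>k=s..n*s. C k * G k m) = P m" for m using step1[OF QC] by (simp add: C_def)
  define T where "T m = 1 / fact m * (\<Prod>l=1..s. pochhammer ((real m - real l + 1) / (real r - real s)) n)" for m
  have T_eq: "T m = (1 / real d ^ (s*n)) * (\<Sum>k=s..n*s. C k * (G k m / fact m))" for m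
  proof -
    have "real d ^ (s * n) * (\<Prod>l=1..s. pochhammer ((real m - real l + 1) / real d) n) = P m"
      using P_poch[OF dpos] by (simp add: P_def)
    then have "(\<Prod>l=1..s. pochhammer ((real m - real l + 1) / real d) n) = P m / real d ^ (s*n)"
      using dpos by (simp add: field_simps)
    then show ?thesis
      by (simp add: T_def rsd flip: CP) (simp add: sum_divide_distrib sum_distrib_left)
  qed
  have "(\<lambda>m. \<Sum>k=s..n*s. C k * (G k m / fact m)) sums (\<Sum>k=s..n*s. C k * exp 1)"
    by (intro sums_sum sums_mult G_sums)
  then have "T sums ((1 / real d ^ (s*n)) * (\<Sum>k=s..n*s. C k * exp 1))"
    unfolding T_eq by (rule sums_mult)
  then have "suminf T = (1 / real d ^ (s*n)) * (\<Sum>k=s..n*s. C k) * exp 1"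
    by (simp add: sums_unique[symmetric] sum_distrib_right)
  moreover have "(\<Sum>k. 1 / fact k * (\<Prod>l=1..s. pochhammer ((real k - real l + 1) / (real r - real s)) n))
      = suminf T" unfolding T_def by (rule refl)
  ultimately show ?thesis
    using dpos unfolding gen_bell_def C_def[symmetric] rsd
    by (simp add: field_simps)
qed

end
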